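(* Let $h \ge 2$ and $k \ge 3$ be integers. For every integer $i_0 \in [0,h-2]$, the sumset size set $\mathcal{R}_{\mathbf{Z}}(h,k)$ contains the arithmetic progression \[ \left\{ (i_0+1)b + (h-i_0)(h(k-2)+1) - \frac{(h+i_0+1)(h-i_0)(k-2)}{2} \;:\; b \in \big[(h-i_0)(k-2) - (k-3),\ (h-i_0)(k-2)\big] \right\}. \] In particular, $\mathcal{R}_{\mathbf{Z}}(h,k)$ contains the integer interval \[ \left[ \frac{h^2(k-2)}{2} + \frac{hk}{2} - k + 3,\ \frac{h^2(k-2)}{2} + \frac{hk}{2} \right]. \]
   Context: For a positive integer $h$ and a finite set $A$ of integers, $hA$ denotes the set of all sums $a_1+\cdots+a_h$ with $a_1,\ldots,a_h \in A$ (not necessarily distinct). The sumset size set is $\mathcal{R}_{\mathbf{Z}}(h,k) = \{ |hA| : A \subseteq \mathbf{Z},\ |A| = k\}$. For real $u,v$, the integer interval $[u,v]$ is $\{n \in \mathbf{Z} : u \le n \le v\}$. *)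

theory Defs
  imports Main
begin

definition hsumset :: "nat \<Rightarrow> int set \<Rightarrow> int set" where
  "hsumset h A = {(\<Sum>i<h. a i) | a. \<forall>i<h. a i \<in> A}"

definition sumset_sizes :: "nat \<Rightarrow> nat \<Rightarrow> nat set" where
  "sumset_sizes h k = {card (hsumset h A) | A. finite A \<and> card A = k}"

end

theory Submission imports Defs begin

lemma hsumset_0: "hsumset 0 A = {0}" by (simp add: hsumset_def)

lemma hsumset_Suc: "hsumset (Suc h) A = {a + s | a s. a \<in> A \<and> s \<in> hsumset h A}"
proof
  show "hsumset (Suc h) A \<subseteq> {a + s | a s. a \<in> A \<and> s \<in> hsumset h A}"
  proof
    fix y assume "y \<in> hsumset (Suc h) A"
    then obtain f where y: "y = (\<Sum>i<Suc h. f i)" and f: "\<forall>i<Suc h. f i \<in> A"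
      unfolding hsumset_def by blast
    have "y = f h + (\<Sum>i<h. f i)" using y by simp
    moreover have "(\<Sum>i<h. f i) \<in> hsumset h A" using f unfolding hsumset_def by auto
    moreover have "f h \<in> A" using f by auto
    ultimately show "y \<in> {a + s | a s. a \<in> A \<and> s \<in> hsumset h A}" by blast
  qed
next
  show "{a + s | a s. a \<in> A \<and> s \<in> hsumset h A} \<subseteq> hsumset (Suc h) A"
  proof
    fix y assume "y \<in> {a + s | a s. a \<in> A \<and> s \<in> hsumset h A}"
    then obtain a f where y: "y = a + (\<Sum>i<h. f i)" and a: "a \<in> A" and f: "\<forall>i<h. f i \<in> A"
      unfolding hsumset_def by blast
    define g where "g = f(h := a)"
    have "(\<Sum>i<h. g i) = (\<Sum>i<h. f i)" unfolding g_def by (intro sum.cong) auto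
    then have "y = (\<Sum>i<Suc h. g i)" using y by (simp add: g_def)
    moreover have "\<forall>i<Suc h. g i \<in> A" using f a unfolding g_def by (auto simp: less_Suc_eq)
    ultimately show "y \<in> hsumset (Suc h) A" unfolding hsumset_def by blast
  qed
qed

definition U :: "nat \<Rightarrow> int \<Rightarrow> int \<Rightarrow> nat \<Rightarrow> int set" where
  "U h L x t = (\<Union>j\<in>{..t}. {int j * x .. int j * x + int (h - j) * L})"

lemma hs_char:
  assumes "0 \<le> L"
  shows "hsumset h ({0..L} \<union> {x}) = U h L x h"
proof (induction h)
  case 0
  then show ?case by (simp add: hsumset_0 U_def)
next
  case (Suc h)
  have "hsumset (Suc h) ({0..L} \<union> {x}) = {a + s | a s. a \<in> {0..L} \<union> {x} \<and> s \<in> U h L x h}"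
    using Suc by (simp add: hsumset_Suc)
  also have "\<dots> = U (Suc h) L x (Suc h)"
  proof
    show "{a + s | a s. a \<in> {0..L} \<union> {x} \<and> s \<in> U h L x h} \<subseteq> U (Suc h) L x (Suc h)"
    proof
      fix y assume "y \<in> {a + s | a s. a \<in> {0..L} \<union> {x} \<and> s \<in> U h L x h}"
      then obtain a s j where y: "y = a + s" and a: "a \<in> {0..L} \<union> {x}" and j: "j \<le> h"
        and s1: "int j * x \<le> s" and s2: "s \<le> int j * x + int (h - j) * L"
        unfolding U_def by auto
      have hj: "int (Suc h - j) = int (h - j) + 1" using j by simp
      show "y \<in> U (Suc h) L x (Suc h)"
      proof (cases "a = x")
        case True
        have hj2: "Suc h - Suc j = h - j" by simp
        have "int (Suc j) * x \<le> y" "y \<le> int (Suc j) * x + int (Suc h - Suc j) * L"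
          using True y s1 s2 by (simp_all only: hj2, simp_all add: algebra_simps)
        then show ?thesis unfolding U_def using j by (intro UN_I[of "Suc j"]) auto
      next
        case False
        then have "0 \<le> a" "a \<le> L" using a by auto
        then have "int j * x \<le> y" "y \<le> int j * x + int (Suc h - j) * L"
          using y s1 s2 hj by (simp_all add: algebra_simps)
        then show ?thesis unfolding U_def using j by (intro UN_I[of j]) auto
      qed
    qed
  next
    show "U (Suc h) L x (Suc h) \<subseteq> {a + s | a s. a \<in> {0..L} \<union> {x} \<and> s \<in> U h L x h}"
    proof
      fix y assume "y \<in> U (Suc h) L x (Suc h)"
      then obtain j where j: "j \<le> Suc h" and s1: "int j * x \<le> y"
        and s2: "y \<le> int j * x + int (Suc h - j) * L"
        unfolding U_def by auto
      show "y \<in> {a + s | a s. a \<in> {0..L} \<union> {x} \<and> s \<in> U h L x h}"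
      proof (cases "j = Suc h")
        case True
        then have "y = x + int h * x" using s1 s2 by (simp add: algebra_simps)
        moreover have "int h * x \<in> U h L x h" unfolding U_def by auto
        ultimately show ?thesis by blast
      next
        case False
        then have jh: "j \<le> h" using j by simp
        have hj: "int (Suc h - j) = int (h - j) + 1" using jh by simp
        show ?thesis
        proof (cases "y \<le> int j * x + int (h - j) * L")
          case True
          then have "y \<in> U h L x h" unfolding U_def using jh s1 by auto
          then have "y = 0 + y \<and> (0::int) \<in> {0..L} \<union> {x} \<and> y \<in> U h L x h" using assms by auto
          then show ?thesis by blast
        next
          case False
          define t where "t = int j * x + int (h - j) * L"
          have "t \<in> U h L x h" unfolding U_def t_def using jh assms
            by (intro UN_I[of j]) auto
          moreover have "y - t \<in> {0..L} \<union> {x}" using False s2 hj unfolding t_def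
            by (auto simp: algebra_simps)
          moreover have "y = (y - t) + t" by simp
          ultimately show ?thesis by blast
        qed
      qed
    qed
  qed
  finally show ?case .
qed


lemma ivl_un: "(a::int) \<le> c \<Longrightarrow> c \<le> b + 1 \<Longrightarrow> b \<le> e \<Longrightarrow> {c..e} \<union> {a..b} = {a..e}"
  by auto

lemma U_lo:
  assumes "0 \<le> L" "1 \<le> d" "d - 1 \<le> int (h - p) * L" "t \<le> p" "p \<le> h"
  shows "U h L (L + d) t = {0 .. int h * L + int t * d}"
  using assms(4)
proof (induction t)
  case 0
  then show ?case by (simp add: U_def)
next
  case (Suc t)
  have th: "Suc t \<le> h" using Suc.prems assms by simp
  have e0: "int (h - Suc t) = int h - int t - 1" using th by simp
  have e1: "int (Suc t) * (L+d) + int (h - Suc t) * L = int h * L + int (Suc t) * d"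
    using e0 by (simp add: algebra_simps)
  have "int (h - p) * L \<le> int (h - Suc t) * L"
    using Suc.prems assms(1) by (intro mult_right_mono) auto
  then have "d - 1 \<le> int (h - Suc t) * L" using assms(3) by linarith
  then have e2: "int (Suc t) * (L + d) \<le> int h * L + int t * d + 1"
    using e0 by (simp add: algebra_simps)
  have e3: "0 \<le> int (Suc t) * (L + d)" using assms by simp
  have e4: "int h * L + int t * d \<le> int h * L + int (Suc t) * d" using assms by simp
  have "U h L (L + d) (Suc t) = {int (Suc t) * (L+d) .. int (Suc t) * (L+d) + int (h - Suc t) * L}
        \<union> U h L (L + d) t"
    unfolding U_def by (simp add: atMost_Suc)
  also have "\<dots> = {0 .. int h * L + int (Suc t) * d}"
  proof -
    have "U h L (L + d) t = {0 .. int h * L + int t * d}" using Suc by simp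
    then show ?thesis unfolding e1 by (simp only:) (rule ivl_un[OF e3 e2 e4])
  qed
  finally show ?case .
qed

lemma card_ivl: "a \<le> b + 1 \<Longrightarrow> int (card {a..b::int}) = b - a + 1"
  by simp

lemma U_hi:
  assumes "0 \<le> L" "0 \<le> d" "int (h - p - 1) * L < d" "p \<le> t" "t \<le> h"
    and base: "U h L (L + d) p = {0 .. int h * L + int p * d}"
  shows "2 * int (card (U h L (L + d) t)) =
     2 * (int h * L + int p * d + 1 + (int t - int p)) + L * (int t - int p) * (2 * int h - int t - int p - 1)"
  using assms(4,5)
proof (induction t rule: dec_induct)
  case base
  have "0 \<le> int h * L + int p * d" using assms(1,2) by simp
  then have "int (card {0 .. int h * L + int p * d}) = int h * L + int p * d + 1"
    by (subst card_ivl) auto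
  then show ?case unfolding assms(6) by simp
next
  case (step t)
  have th: "Suc t \<le> h" using step by simp
  have e0: "int (h - Suc t) = int h - int t - 1" using th by simp
  define I where "I = {int (Suc t) * (L+d) .. int (Suc t) * (L+d) + int (h - Suc t) * L}"
  have UU: "U h L (L + d) (Suc t) = I \<union> U h L (L + d) t"
    unfolding U_def I_def by (simp add: atMost_Suc)
  have ub: "y \<le> int h * L + int t * d" if "y \<in> U h L (L + d) t" for y
  proof -
    have "\<exists>j\<in>{..t}. y \<in> {int j * (L + d) .. int j * (L + d) + int (h - j) * L}"
      using that unfolding U_def by (simp only: UN_iff)
    then obtain j where j0: "j \<in> {..t}" and y0: "y \<in> {int j * (L + d) .. int j * (L + d) + int (h - j) * L}"
      by (rule bexE)
    have j: "j \<le> t" using j0 by simp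
    have y: "y \<le> int j * (L + d) + int (h - j) * L" using y0 by (simp only: atLeastAtMost_iff)
    have "int (h - j) = int h - int j" using j th by simp
    then have "y \<le> int h * L + int j * d" using y by (simp add: algebra_simps)
    moreover have "int j * d \<le> int t * d" using j assms(2) by (intro mult_right_mono) auto
    ultimately show ?thesis by linarith
  qed
  have "int (h - Suc t) * L \<le> int (h - p - 1) * L"
    using step assms(1) by (intro mult_right_mono) auto
  then have "int (h - Suc t) * L < d" using assms(3) by linarith
  then have lb: "int h * L + int t * d < int (Suc t) * (L + d)"
    using e0 by (simp add: algebra_simps)
  have disj: "I \<inter> U h L (L + d) t = {}"
  proof (rule equals0I)
    fix y assume y: "y \<in> I \<inter> U h L (L + d) t"
    then have "y \<le> int h * L + int t * d" using ub by blast
    moreover have "int (Suc t) * (L + d) \<le> y" using y unfolding I_def by auto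
    ultimately show False using lb by linarith
  qed
  have fin: "finite (U h L (L + d) t)" unfolding U_def by auto
  have cI: "int (card I) = int (h - Suc t) * L + 1" unfolding I_def
    using assms(1) by (subst card_ivl) auto
  have "2 * int (card (U h L (L + d) (Suc t))) = 2 * int (card I) + 2 * int (card (U h L (L + d) t))"
    unfolding UU using disj fin by (subst card_Un_disjoint) (auto simp: I_def)
  also have "\<dots> = 2 * (int h * L + int p * d + 1 + (int (Suc t) - int p))
      + L * (int (Suc t) - int p) * (2 * int h - int (Suc t) - int p - 1)"
    unfolding cI step.IH[OF Suc_leD[OF th]] e0 by (simp add: algebra_simps)
  finally show ?case .
qed


lemma core:
  assumes "1 \<le> p" "p < h" "1 \<le> L" "int (h - p - 1) * L < d" "d \<le> int (h - p) * L"
  shows "2 * int (card (hsumset h ({0..L} \<union> {L + d}))) =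
     2 * (int h * L + int p * d + 1 + (int h - int p)) + L * (int h - int p) * (int h - int p - 1)"
proof -
  have "0 \<le> int (h - p - 1) * L" using assms by simp
  then have d1: "1 \<le> d" using assms(4) by linarith
  have lo: "U h L (L + d) p = {0 .. int h * L + int p * d}"
    using assms d1 by (intro U_lo) auto
  have "2 * int (card (U h L (L + d) h)) =
     2 * (int h * L + int p * d + 1 + (int h - int p)) + L * (int h - int p) * (2 * int h - int h - int p - 1)"
    using assms d1 lo by (intro U_hi) auto
  moreover have "2 * int h - int h - int p - 1 = int h - int p - 1" by simp
  ultimately show ?thesis using hs_char[of L h "L + d"] assms(3) by simp
qed

lemma arith_id:
  fixes H P L d e :: int
  assumes "2 * e = (H + P) * (H - P + 1)"
  shows "2 * (P * (L + d) + (H - P + 1) * (H * L + 1) - e * L) =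
     2 * (H * L + P * d + 1 + (H - P)) + L * (H - P) * (H - P - 1)"
proof -
  have "2 * (P * (L + d) + (H - P + 1) * (H * L + 1) - e * L) =
        2 * (P * (L + d) + (H - P + 1) * (H * L + 1)) - (2 * e) * L" by (simp add: algebra_simps)
  also have "\<dots> = 2 * (P * (L + d) + (H - P + 1) * (H * L + 1)) - ((H + P) * (H - P + 1)) * L"
    unfolding assms ..
  also have "\<dots> = 2 * (H * L + P * d + 1 + (H - P)) + L * (H - P) * (H - P - 1)"
    by (simp add: algebra_simps)
  finally show ?thesis .
qed

lemma part1:
  fixes h k :: nat
  assumes "h \<ge> 2" and "k \<ge> 3"
  and i0: "0 \<le> i0" "i0 \<le> int h - 2"
  and b: "(int h - i0) * (int k - 2) - (int k - 3) \<le> b" "b \<le> (int h - i0) * (int k - 2)"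
  shows "(i0 + 1) * b + (int h - i0) * (int h * (int k - 2) + 1)
                 - ((int h + i0 + 1) * (int h - i0) * (int k - 2)) div 2
               \<in> int ` sumset_sizes h k"
proof -
  define L where "L = int k - 2"
  define p where "p = nat (i0 + 1)"
  define d where "d = b - L"
  have P: "int p = i0 + 1" unfolding p_def using i0 by simp
  have p1: "1 \<le> p" "p < h" using P i0 by linarith+
  have L1: "1 \<le> L" unfolding L_def using assms by simp
  have hp1: "int (h - p - 1) = int h - i0 - 2" using p1 P by simp
  have hp: "int (h - p) = int h - i0 - 1" using p1 P by simp
  have k3: "int k - 3 = L - 1" unfolding L_def by simp
  have c1: "int (h - p - 1) * L < d"
  proof -
    have Ld: "int k - 2 = L" unfolding L_def ..
    have "(int h - i0) * L - (L - 1) \<le> b" using b(1) unfolding Ld k3 .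
    then show ?thesis unfolding hp1 d_def by (simp add: algebra_simps)
  qed
  have c2: "d \<le> int (h - p) * L"
  proof -
    have Ld: "int k - 2 = L" unfolding L_def ..
    have "b \<le> (int h - i0) * L" using b(2) unfolding Ld .
    then show ?thesis unfolding hp d_def by (simp add: algebra_simps)
  qed
  define A where "A = {0..L} \<union> {L + d}"
  have C: "2 * int (card (hsumset h A)) =
     2 * (int h * L + int p * d + 1 + (int h - int p)) + L * (int h - int p) * (int h - int p - 1)"
    unfolding A_def using core[OF p1 L1 c1 c2] .
  have d1: "1 \<le> d"
  proof -
    have "0 \<le> int (h - p - 1) * L" using L1 by simp
    then show ?thesis using c1 by linarith
  qed
  have fA: "finite A" unfolding A_def by simp
  have cA: "card A = k"
  proof -
    have "L + d \<notin> {0..L}" using d1 by simp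
    then have "card A = Suc (card {0..L})" unfolding A_def by simp
    moreover have "int (card {0..L}) = L + 1" using L1 by simp
    then have "int (card {0..L}) + 1 = int k" unfolding L_def by simp
    then have "card {0..L} + 1 = k" by linarith
    ultimately show ?thesis by simp
  qed
  have ev: "even ((int h + i0 + 1) * (int h - i0))"
  proof -
    have "even (int h + i0 + 1) \<or> even (int h - i0)" by presburger
    then show ?thesis by auto
  qed
  then obtain e where e: "(int h + i0 + 1) * (int h - i0) = 2 * e" by (rule dvdE)
  have dv: "((int h + i0 + 1) * (int h - i0) * (int k - 2)) div 2 = e * L"
    unfolding e L_def by simp
  have q1: "int h + int p = int h + i0 + 1" "int h - int p + 1 = int h - i0" using P by simp_all
  have e2: "2 * e = (int h + int p) * (int h - int p + 1)" unfolding q1 e ..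
  have "2 * ((i0 + 1) * b + (int h - i0) * (int h * (int k - 2) + 1) - e * L)
      = 2 * (int p * (L + d) + (int h - int p + 1) * (int h * L + 1) - e * L)"
    using P unfolding d_def L_def by simp
  also have "\<dots> = 2 * int (card (hsumset h A))" unfolding C by (rule arith_id[OF e2])
  finally have "(i0 + 1) * b + (int h - i0) * (int h * (int k - 2) + 1) - e * L = int (card (hsumset h A))"
    by simp
  moreover have "card (hsumset h A) \<in> sumset_sizes h k"
    unfolding sumset_sizes_def using fA cA by blast
  ultimately show ?thesis unfolding dv by force
qed


theorem mainTheorem10:
  fixes h k :: nat
  assumes "h \<ge> 2" and "k \<ge> 3"
  shows "(\<forall>i0::int. 0 \<le> i0 \<and> i0 \<le> int h - 2 \<longrightarrow>
            (\<forall>b::int. (int h - i0) * (int k - 2) - (int k - 3) \<le> b \<and> b \<le> (int h - i0) * (int k - 2) \<longrightarrow>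
               (i0 + 1) * b + (int h - i0) * (int h * (int k - 2) + 1)
                 - ((int h + i0 + 1) * (int h - i0) * (int k - 2)) div 2
               \<in> int ` sumset_sizes h k))
       \<and> {(int h ^ 2 * (int k - 2) + int h * int k) div 2 - int k + 3 ..
          (int h ^ 2 * (int k - 2) + int h * int k) div 2} \<subseteq> int ` sumset_sizes h k"
proof (intro conjI allI impI subsetI)
  fix i0 b :: int
  assume "0 \<le> i0 \<and> i0 \<le> int h - 2"
    "(int h - i0) * (int k - 2) - (int k - 3) \<le> b \<and> b \<le> (int h - i0) * (int k - 2)"
  then show "(i0 + 1) * b + (int h - i0) * (int h * (int k - 2) + 1)
                 - ((int h + i0 + 1) * (int h - i0) * (int k - 2)) div 2
               \<in> int ` sumset_sizes h k"
    using part1[OF assms] by blast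
next
  fix y assume y: "y \<in> {(int h ^ 2 * (int k - 2) + int h * int k) div 2 - int k + 3 ..
          (int h ^ 2 * (int k - 2) + int h * int k) div 2}"
  define L where "L = int k - 2"
  have "even ((int h + 1) * int h)" by auto
  then obtain e where e: "(int h + 1) * int h = 2 * e" by (rule dvdE)
  have eq1: "int h ^ 2 * (int k - 2) + int h * int k = 2 * (e * L + int h)"
  proof -
    have "int h ^ 2 * (int k - 2) + int h * int k = ((int h + 1) * int h) * L + 2 * int h"
      unfolding L_def by (simp add: algebra_simps power2_eq_square)
    then show ?thesis unfolding e by (simp add: algebra_simps)
  qed
  have F: "2 * (e * L) = int h * (int h * L + 1) + int h * L - int h"
  proof -
    have "2 * (e * L) = ((int h + 1) * int h) * L" unfolding e by simp
    then show ?thesis by (simp add: algebra_simps)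
  qed
  have y1: "e * L + int h - L + 1 \<le> y" "y \<le> e * L + int h"
    using y unfolding eq1 L_def by auto
  define b where "b = y - int h * (int h * L + 1) + e * L"
  have b1: "(int h - 0) * (int k - 2) - (int k - 3) \<le> b" "b \<le> (int h - 0) * (int k - 2)"
    using y1 F unfolding b_def L_def[symmetric] by (simp_all add: L_def algebra_simps)
  have "(0 + 1) * b + (int h - 0) * (int h * (int k - 2) + 1)
                 - ((int h + 0 + 1) * (int h - 0) * (int k - 2)) div 2
               \<in> int ` sumset_sizes h k"
    using part1[OF assms _ _ b1] assms by simp
  moreover have "((int h + 0 + 1) * (int h - 0) * (int k - 2)) div 2 = e * L"
    using e unfolding L_def by simp
  ultimately show "y \<in> int ` sumset_sizes h k" unfolding b_def L_def by simp
qed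

end
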